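(* Let $D$ be a domain in $\mathbb{R}^d$, $p\in\partial D$ a strictly convex boundary point, $q\in D$, and $(\varphi_j)$ a sequence of projective automorphisms of $D$ with $q_j:=\varphi_j(q)\to p$. Let $U$ be a neighborhood of $p$ such that $D\cap U$ is convex, and set $D_j=\varphi_j^{-1}(D\cap U)$. Then $(D_j)$ is an exhaustion of $D$: for every compact set $K\subset D$ there is $j_0$ such that $K\subset D_j$ for all $j\ge j_0$.
   Context: $\mathbb{R}^d$ is embedded in $\mathbb{P}\mathbb{R}^d$ as the points $(1:x_1:\dots:x_d)$; a projective map is a map induced by a linear map of $\mathbb{R}^{d+1}$ acting on homogeneous coordinates, and a projective automorphism of $D$ is a bijective projective map of $D$ onto itself. A point $p\in\partial D$ is strictly convex if $\partial D$ is $\mathcal{C}^2$-smooth near $p$ and the restriction to the tangent hyperplane at $p$ of the Hessian of a local defining function is positive definite. *)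

theory Defs
  imports "HOL-Analysis.Analysis"
begin

text \<open>R^d is real^'n; homogeneous coordinates (x0 : x) are elements of real \<times> real^'n,
  and the point x of R^d is (1 : x).\<close>

definition projective_map_on :: "(real^'n \<Rightarrow> real^'n) \<Rightarrow> (real^'n) set \<Rightarrow> bool" where
  "projective_map_on f S \<longleftrightarrow>
     (\<exists>L :: (real \<times> (real^'n)) \<Rightarrow> (real \<times> (real^'n)). linear L \<and>
        (\<forall>x\<in>S. fst (L (1, x)) \<noteq> 0 \<and> f x = (1 / fst (L (1, x))) *\<^sub>R snd (L (1, x))))"

definition projective_automorphism :: "(real^'n \<Rightarrow> real^'n) \<Rightarrow> (real^'n) set \<Rightarrow> bool" where
  "projective_automorphism f D \<longleftrightarrow> projective_map_on f D \<and> bij_betw f D D"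

definition domain :: "(real^'n) set \<Rightarrow> bool" where
  "domain D \<longleftrightarrow> open D \<and> connected D \<and> D \<noteq> {}"

text \<open>Strictly convex boundary point: near p the boundary is C^2, given by a local defining
  function rho (D \<inter> V = {rho < 0}, nonvanishing gradient at p) with gradient g and
  continuous Hessian H, and the Hessian at p is positive definite on the tangent hyperplane.\<close>

definition strictly_convex_boundary_point :: "(real^'n) set \<Rightarrow> real^'n \<Rightarrow> bool" where
  "strictly_convex_boundary_point D p \<longleftrightarrow> p \<in> frontier D \<and>
     (\<exists>V (\<rho> :: real^'n \<Rightarrow> real) (g :: real^'n \<Rightarrow> real^'n) (H :: real^'n \<Rightarrow> real^'n^'n).
        open V \<and> p \<in> V \<and>
        (\<forall>x\<in>V. (\<rho> has_derivative (\<lambda>h. g x \<bullet> h)) (at x)) \<and>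
        (\<forall>x\<in>V. (g has_derivative (\<lambda>h. H x *v h)) (at x)) \<and>
        continuous_on V H \<and>
        D \<inter> V = {x\<in>V. \<rho> x < 0} \<and>
        g p \<noteq> 0 \<and>
        (\<forall>v. v \<noteq> 0 \<and> g p \<bullet> v = 0 \<longrightarrow> v \<bullet> (H p *v v) > 0))"

end

theory Submission
  imports Defs
begin


lemma mat_bound:
  fixes A :: "real^'n^'m"
  shows "norm (A *v x) \<le> real CARD('m) * real CARD('n) * norm A * norm x"
proof -
  have bl: "bounded_linear ((*v) A)"
    by (simp add: matrix_vector_mul_linear linear_conv_bounded_linear)
  have "\<And>i j. \<bar>A $ i $ j\<bar> \<le> norm A"
    proof -
    fix i j
    have "\<bar>A $ i $ j\<bar> \<le> norm (A $ i)" using component_le_norm_cart[of "A $ i" j] by simp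
    also have "\<dots> \<le> norm A" by (rule Finite_Cartesian_Product.norm_nth_le)
    finally show "\<bar>A $ i $ j\<bar> \<le> norm A" .
  qed
  then have "onorm ((*v) A) \<le> real CARD('m) * real CARD('n) * norm A"
    by (rule onorm_le_matrix_component)
  moreover have "norm (A *v x) \<le> onorm ((*v) A) * norm x"
    using onorm[OF bl] by simp
  ultimately show ?thesis
    by (meson mult_right_mono norm_ge_zero order_trans)
qed

lemma line_deriv:
  assumes "(f has_derivative f') (at (z + t *\<^sub>R w))"
  shows "((\<lambda>t. f (z + t *\<^sub>R w)) has_derivative (\<lambda>h. f' (h *\<^sub>R w))) (at t)"
proof -
  have "((\<lambda>t. z + t *\<^sub>R w) has_derivative (\<lambda>h. h *\<^sub>R w)) (at t)"
    by (auto intro!: derivative_eq_intros)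
  from has_derivative_compose[OF this assms] show ?thesis .
qed

lemma line_deriv_rho:
  fixes z w :: "real^'n"
  assumes "(\<rho> has_derivative (\<lambda>h. g x \<bullet> h)) (at x)" "x = z + t *\<^sub>R w"
  shows "((\<lambda>t. \<rho> (z + t *\<^sub>R w)) has_real_derivative (g x \<bullet> w)) (at t)"
proof -
  have "((\<lambda>t. \<rho> (z + t *\<^sub>R w)) has_derivative (\<lambda>h. g x \<bullet> (h *\<^sub>R w))) (at t)"
    using line_deriv[of \<rho> "\<lambda>h. g x \<bullet> h" z t w] assms by simp
  then show ?thesis unfolding has_field_derivative_def
    by (rule has_derivative_eq_rhs) (auto simp: fun_eq_iff)
qed

lemma line_deriv_g:
  fixes z w :: "real^'n"
  assumes "(g has_derivative (\<lambda>h. H x *v h)) (at x)" "x = z + t *\<^sub>R w"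
  shows "((\<lambda>t. g (z + t *\<^sub>R w) \<bullet> w) has_real_derivative (w \<bullet> (H x *v w))) (at t)"
proof -
  have "((\<lambda>t. g (z + t *\<^sub>R w)) has_derivative (\<lambda>h. H x *v (h *\<^sub>R w))) (at t)"
    using line_deriv[of g "\<lambda>h. H x *v h" z t w] assms by simp
  then have "((\<lambda>t. g (z + t *\<^sub>R w) \<bullet> w) has_derivative (\<lambda>h. (H x *v (h *\<^sub>R w)) \<bullet> w)) (at t)"
    by (intro derivative_eq_intros) auto
  then show ?thesis unfolding has_field_derivative_def
    by (rule has_derivative_eq_rhs) (auto simp: fun_eq_iff matrix_vector_mult_scaleR inner_commute)
qed

lemma SC:
  fixes D :: "(real^'n) set"
  assumes scb: "strictly_convex_boundary_point D p" and oD: "open D"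
  shows "\<exists>r0>0. \<forall>s. 0 < s \<and> s \<le> r0 \<longrightarrow> (\<exists>\<epsilon>>0. \<forall>z w. dist z p < \<epsilon> \<and> norm w = 1 \<longrightarrow>
            \<not> (z + s *\<^sub>R w \<in> D \<and> z - s *\<^sub>R w \<in> D))"
proof -
  obtain V \<rho> g H where V: "open V" "p \<in> V"
    and d\<rho>: "\<forall>x\<in>V. (\<rho> has_derivative (\<lambda>h. g x \<bullet> h)) (at x)"
    and dg: "\<forall>x\<in>V. (g has_derivative (\<lambda>h. H x *v h)) (at x)"
    and cH: "continuous_on V H" and DV: "D \<inter> V = {x\<in>V. \<rho> x < 0}"
    and gp: "g p \<noteq> 0" and pos: "\<forall>v. v \<noteq> 0 \<and> g p \<bullet> v = 0 \<longrightarrow> v \<bullet> (H p *v v) > 0"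
    and fr: "p \<in> frontier D"
    using scb unfolding strictly_convex_boundary_point_def by blast
  have "p \<notin> D" using fr oD by (simp add: frontier_def interior_open)
  moreover have "\<rho> p < 0 \<Longrightarrow> p \<in> D" using DV V by blast
  ultimately have rp: "\<rho> p \<ge> 0" by force
  define F where "F w = max (w \<bullet> (H p *v w)) \<bar>g p \<bullet> w\<bar>" for w
  have cF: "continuous_on (sphere 0 1) F" unfolding F_def by (intro continuous_intros)
  have "(1 / norm (g p)) *\<^sub>R g p \<in> sphere 0 1" using gp by simp
  hence ne: "sphere (0::real^'n) 1 \<noteq> {}" by blast
  obtain w0 where w0: "w0 \<in> sphere 0 1" "\<forall>w\<in>sphere 0 1. F w0 \<le> F w"
    using continuous_attains_inf[OF compact_sphere ne cF] by blast
  define c where "c = F w0"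
  have c: "c > 0"
  proof (cases "g p \<bullet> w0 = 0")
    case True
    have "w0 \<noteq> 0" using w0 by auto
    then show ?thesis using pos True unfolding c_def F_def by auto
  next
    case False
    then show ?thesis unfolding c_def F_def by auto
  qed
  have cw: "c \<le> w \<bullet> (H p *v w) \<or> c \<le> \<bar>g p \<bullet> w\<bar>" if "norm w = 1" for w
    using w0(2) that unfolding c_def F_def by (auto simp: max_def split: if_splits)
  have c\<rho>: "isCont \<rho> p" using has_derivative_continuous[OF d\<rho>[rule_format, OF V(2)]] .
  have cg: "isCont g p" using has_derivative_continuous[OF dg[rule_format, OF V(2)]] .
  have cHp: "isCont H p" using cH V(2) continuous_on_eq_continuous_at[OF V(1)] by blast
  define M where "M = real CARD('n) * real CARD('n)"
  have M: "M > 0" unfolding M_def by simp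
  obtain e1 where e1: "e1 > 0" "ball p e1 \<subseteq> V" using V open_contains_ball by blast
  obtain e2 where e2: "e2 > 0" "\<forall>y. dist y p < e2 \<longrightarrow> dist (g y) (g p) < c/2"
    using cg[unfolded continuous_at_eps_delta, rule_format, of "c/2"] c by auto
  obtain e3 where e3: "e3 > 0" "\<forall>y. dist y p < e3 \<longrightarrow> dist (H y) (H p) < c/(2*M)"
    using cHp[unfolded continuous_at_eps_delta, rule_format, of "c/(2*M)"] c M by auto
  define \<delta>1 where "\<delta>1 = min e1 (min e2 e3)"
  have \<delta>1: "\<delta>1 > 0" using e1 e2 e3 by (simp add: \<delta>1_def)
  have inV: "y \<in> V" if "dist y p < \<delta>1" for y
    using that e1 by (auto simp: \<delta>1_def dist_commute)
  have gb: "\<bar>g y \<bullet> w - g p \<bullet> w\<bar> < c/2" if "dist y p < \<delta>1" "norm w = 1" for y w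
  proof -
    have "\<bar>g y \<bullet> w - g p \<bullet> w\<bar> = \<bar>(g y - g p) \<bullet> w\<bar>" by (simp add: inner_diff_left)
    also have "\<dots> \<le> norm (g y - g p) * norm w" by (rule Cauchy_Schwarz_ineq2)
    also have "\<dots> < c/2" using that e2 by (simp add: \<delta>1_def dist_norm)
    finally show ?thesis .
  qed
  have Hb: "\<bar>w \<bullet> (H y *v w) - w \<bullet> (H p *v w)\<bar> < c/2" if "dist y p < \<delta>1" "norm w = 1" for y w
  proof -
    have "\<bar>w \<bullet> (H y *v w) - w \<bullet> (H p *v w)\<bar> = \<bar>w \<bullet> ((H y - H p) *v w)\<bar>"
      by (simp add: inner_diff_right matrix_vector_mult_diff_rdistrib)
    also have "\<dots> \<le> norm w * norm ((H y - H p) *v w)" by (rule Cauchy_Schwarz_ineq2)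
    also have "\<dots> \<le> M * norm (H y - H p) * norm w"
      using mat_bound[of "H y - H p" w] that unfolding M_def by simp
    also have "\<dots> < M * (c/(2*M)) * 1"
    proof -
      have "norm (H y - H p) < c/(2*M)" using that e3 by (auto simp: \<delta>1_def dist_norm)
      then show ?thesis using M that(2) by (simp add: field_simps)
    qed
    also have "\<dots> = c/2" using M by simp
    finally show ?thesis .
  qed
  define r0 where "r0 = \<delta>1 / 2"
  have r0: "r0 > 0" using \<delta>1 by (simp add: r0_def)
  show ?thesis
  proof (rule exI[of _ r0], intro conjI allI impI r0)
    fix s :: real assume s: "0 < s \<and> s \<le> r0"
    have m: "min (c * s / 2) (c * s^2 / 4) > 0" using s c by simp
    obtain e4 where e4: "e4 > 0" "\<forall>z. dist z p < e4 \<longrightarrow> dist (\<rho> z) (\<rho> p) < min (c * s / 2) (c * s^2 / 4)"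
      using c\<rho>[unfolded continuous_at_eps_delta, rule_format, OF m] by auto
    show "\<exists>\<epsilon>>0. \<forall>z w. dist z p < \<epsilon> \<and> norm w = 1 \<longrightarrow> \<not> (z + s *\<^sub>R w \<in> D \<and> z - s *\<^sub>R w \<in> D)"
    proof (intro exI[of _ "min e4 r0"] conjI allI impI notI)
      show "min e4 r0 > 0" using e4 r0 by simp
      fix z w assume zw: "dist z p < min e4 r0 \<and> norm w = 1" and inD: "z + s *\<^sub>R w \<in> D \<and> z - s *\<^sub>R w \<in> D"
      have \<rho>z: "\<rho> z > - min (c * s / 2) (c * s^2 / 4)"
      proof -
        have "dist (\<rho> z) (\<rho> p) < min (c * s / 2) (c * s^2 / 4)" using e4 zw by auto
        then show ?thesis using rp unfolding dist_real_def by (smt (verit))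
      qed
      have near: "dist (z + t *\<^sub>R v) p < \<delta>1" if "\<bar>t\<bar> \<le> s" "norm v = 1" for t v
      proof -
        have "dist (z + t *\<^sub>R v) p \<le> dist z p + norm (t *\<^sub>R v)"
          by (metis dist_norm dist_triangle2 add_diff_cancel_left' norm_minus_commute)
        also have "\<dots> < r0 + s" using zw that by simp
        also have "\<dots> \<le> \<delta>1" using s by (simp add: r0_def)
        finally show ?thesis .
      qed
      have neg: "\<rho> (z + t *\<^sub>R v) < 0" if "\<bar>t\<bar> \<le> s" "norm v = 1" "z + t *\<^sub>R v \<in> D" for t v
        using near[OF that(1,2)] inV DV that(3) by blast
      have d1: "((\<lambda>t. \<rho> (z + t *\<^sub>R v)) has_real_derivative (g (z + t *\<^sub>R v) \<bullet> v)) (at t)"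
        if "\<bar>t\<bar> \<le> s" "norm v = 1" for t v
        using line_deriv_rho[of \<rho> g "z + t *\<^sub>R v" z t v] d\<rho> inV near[OF that] by blast
      have d2: "((\<lambda>t. g (z + t *\<^sub>R v) \<bullet> v) has_real_derivative (v \<bullet> (H (z + t *\<^sub>R v) *v v))) (at t)"
        if "\<bar>t\<bar> \<le> s" "norm v = 1" for t v
        using line_deriv_g[of g H "z + t *\<^sub>R v" z t v] dg inV near[OF that] by blast
      have lin: "z + s *\<^sub>R v \<notin> D" if v: "norm v = 1" "g p \<bullet> v \<ge> c" for v
      proof
        assume A: "z + s *\<^sub>R v \<in> D"
        obtain \<xi> where \<xi>: "0 < \<xi>" "\<xi> < s"
          "\<rho> (z + s *\<^sub>R v) - \<rho> (z + 0 *\<^sub>R v) = (s - 0) * (g (z + \<xi> *\<^sub>R v) \<bullet> v)"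
          using MVT2[of 0 s "\<lambda>t. \<rho> (z + t *\<^sub>R v)" "\<lambda>t. g (z + t *\<^sub>R v) \<bullet> v"] s d1[OF _ v(1)] by auto
        have "\<bar>g (z + \<xi> *\<^sub>R v) \<bullet> v - g p \<bullet> v\<bar> < c/2" using gb[OF near[of \<xi> v] v(1)] \<xi> v by simp
        hence "g (z + \<xi> *\<^sub>R v) \<bullet> v > c/2" using v by arith
        hence "s * (g (z + \<xi> *\<^sub>R v) \<bullet> v) \<ge> s * (c/2)" using s by simp
        hence "\<rho> (z + s *\<^sub>R v) \<ge> \<rho> z + s * (c/2)" using \<xi>(3) by simp
        moreover have "\<rho> (z + s *\<^sub>R v) < 0" using neg[of s v] A s v by simp
        ultimately show False using \<rho>z min.cobounded1[of "c * s / 2" "c * s^2 / 4"] by (smt (verit) mult.commute times_divide_eq_right)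
      qed
      consider "c \<le> \<bar>g p \<bullet> w\<bar>" | "c \<le> w \<bullet> (H p *v w)" using cw zw by blast
      then show False
      proof cases
        case 1
        show False
        proof (cases "g p \<bullet> w \<ge> c")
          case True then show False using lin[of w] zw inD by blast
        next
          case False
          hence "g p \<bullet> (-w) \<ge> c" using 1 by auto
          moreover have "z + s *\<^sub>R (-w) = z - s *\<^sub>R w" by simp
          ultimately show False using lin[of "-w"] zw inD by auto
        qed
      next
        case 2
        have w1: "norm w = 1" using zw by simp
        have w2: "norm (-w) = 1" using zw by simp
        have h2: "w \<bullet> (H (z + t *\<^sub>R w) *v w) > c/2" if "\<bar>t\<bar> \<le> s" for t
        proof -
          have "\<bar>w \<bullet> (H (z + t *\<^sub>R w) *v w) - w \<bullet> (H p *v w)\<bar> < c/2" by (rule Hb[OF near[OF that w1] w1])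
          then show ?thesis using 2 by arith
        qed
        have kd: "g (z + t *\<^sub>R w) \<bullet> w + g (z + t *\<^sub>R (-w)) \<bullet> (-w) - c * t \<ge> 0" if "0 \<le> t" "t \<le> s" for t
        proof (cases "t = 0")
          case True then show ?thesis by simp
        next
          case False
          hence t: "-t < t" using that by simp
          have "\<exists>\<zeta>. -t < \<zeta> \<and> \<zeta> < t \<and>
            g (z + t *\<^sub>R w) \<bullet> w - g (z + (-t) *\<^sub>R w) \<bullet> w = (t - (-t)) * (w \<bullet> (H (z + \<zeta> *\<^sub>R w) *v w))"
          proof (rule MVT2[OF t])
            fix x assume "-t \<le> x" "x \<le> t"
            then have "\<bar>x\<bar> \<le> s" using that by arith
            then show "((\<lambda>t. g (z + t *\<^sub>R w) \<bullet> w) has_real_derivative (w \<bullet> (H (z + x *\<^sub>R w) *v w))) (at x)"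
              by (rule d2[OF _ w1])
          qed
          then obtain \<zeta> where \<zeta>: "-t < \<zeta>" "\<zeta> < t"
            "g (z + t *\<^sub>R w) \<bullet> w - g (z + (-t) *\<^sub>R w) \<bullet> w = (t - (-t)) * (w \<bullet> (H (z + \<zeta> *\<^sub>R w) *v w))"
            by blast
          have "w \<bullet> (H (z + \<zeta> *\<^sub>R w) *v w) > c/2" using h2[of \<zeta>] \<zeta> that by auto
          hence "(t - (-t)) * (w \<bullet> (H (z + \<zeta> *\<^sub>R w) *v w)) \<ge> (2*t) * (c/2)"
            using that by (metis less_imp_le mult_left_mono minus_minus diff_minus_eq_add mult_2 zero_le_mult_iff zero_le_numeral)
          moreover have "z + t *\<^sub>R (-w) = z + (-t) *\<^sub>R w" by simp
          ultimately show ?thesis using \<zeta>(3) by (simp add: inner_minus_right mult.commute)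
        qed
        define k where "k t = \<rho> (z + t *\<^sub>R w) + \<rho> (z + t *\<^sub>R (-w)) - c/2 * t^2" for t
        have dk: "(k has_real_derivative (g (z + t *\<^sub>R w) \<bullet> w + g (z + t *\<^sub>R (-w)) \<bullet> (-w) - c * t)) (at t)"
          if "0 \<le> t" "t \<le> s" for t
        proof -
          have a: "\<bar>t\<bar> \<le> s" using that by simp
          have "((\<lambda>t. c/2 * t^2) has_real_derivative c/2 * (2 * t)) (at t)"
            by (auto intro!: derivative_eq_intros)
          from DERIV_diff[OF DERIV_add[OF d1[OF a w1] d1[OF a w2]] this]
          show ?thesis unfolding k_def by simp
        qed
        obtain \<xi> where \<xi>: "0 < \<xi>" "\<xi> < s"
          "k s - k 0 = (s - 0) * (g (z + \<xi> *\<^sub>R w) \<bullet> w + g (z + \<xi> *\<^sub>R (-w)) \<bullet> (-w) - c * \<xi>)"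
        proof -
          have "\<exists>\<xi>. 0 < \<xi> \<and> \<xi> < s \<and> k s - k 0 = (s - 0) * (g (z + \<xi> *\<^sub>R w) \<bullet> w + g (z + \<xi> *\<^sub>R (-w)) \<bullet> (-w) - c * \<xi>)"
            using s by (intro MVT2 dk) auto
          then show ?thesis using that by blast
        qed
        have "0 \<le> (s - 0) * (g (z + \<xi> *\<^sub>R w) \<bullet> w + g (z + \<xi> *\<^sub>R (-w)) \<bullet> (-w) - c * \<xi>)"
          using \<xi> kd[of \<xi>] s by (intro mult_nonneg_nonneg) auto
        hence "k s \<ge> k 0" using \<xi>(3) by linarith
        hence "\<rho> (z + s *\<^sub>R w) + \<rho> (z - s *\<^sub>R w) \<ge> 2 * \<rho> z + c/2 * s^2" unfolding k_def by simp
        moreover have "\<rho> (z + s *\<^sub>R w) < 0" using neg[of s w] inD s w1 by simp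
        moreover have "\<rho> (z - s *\<^sub>R w) < 0" using neg[of s "-w"] inD s w2 by simp
        ultimately show False using \<rho>z min.cobounded2[of "c * s / 2" "c * s^2 / 4"] by linarith
      qed
    qed
  qed
qed



lemma proj_line:
  fixes L :: "real \<times> (real^'n) \<Rightarrow> real \<times> (real^'n)"
  assumes "linear L"
  shows "L (1, c + t *\<^sub>R u) = L (1, c) + t *\<^sub>R L (0, u)"
proof -
  have "(1::real, c + t *\<^sub>R u) = (1, c) + t *\<^sub>R (0, u)" by simp
  then have "L (1, c + t *\<^sub>R u) = L ((1, c) + t *\<^sub>R (0, u))" by simp
  also have "\<dots> = L (1, c) + t *\<^sub>R L (0, u)"
    by (simp only: linear_add[OF assms] linear_scale[OF assms])
  finally show ?thesis .
qed

lemma proj_diff: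
  fixes B C :: "real^'n"
  assumes "m0 \<noteq> 0" "m0 + t * \<gamma> \<noteq> 0"
  shows "(1 / (m0 + t * \<gamma>)) *\<^sub>R (B + t *\<^sub>R C) =
         (1 / m0) *\<^sub>R B + (t / (m0 * (m0 + t * \<gamma>))) *\<^sub>R (m0 *\<^sub>R C - \<gamma> *\<^sub>R B)"
proof -
  have nz: "m0 * (m0 + t * \<gamma>) \<noteq> 0" using assms by simp
  have l: "(1 / (m0 + t * \<gamma>)) *\<^sub>R (B + t *\<^sub>R C) = (1 / (m0 + t * \<gamma>)) *\<^sub>R B + (t / (m0 + t * \<gamma>)) *\<^sub>R C"
    by (simp add: scaleR_add_right)
  have r: "(1 / m0) *\<^sub>R B + (t / (m0 * (m0 + t * \<gamma>))) *\<^sub>R (m0 *\<^sub>R C - \<gamma> *\<^sub>R B)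
       = (1 / m0 - t * \<gamma> / (m0 * (m0 + t * \<gamma>))) *\<^sub>R B + (t * m0 / (m0 * (m0 + t * \<gamma>))) *\<^sub>R C"
    by (simp add: algebra_simps)
  have e1: "1 / m0 - t * \<gamma> / (m0 * (m0 + t * \<gamma>)) = 1 / (m0 + t * \<gamma>)"
    using assms nz by (simp add: field_simps)
  have e2: "t * m0 / (m0 * (m0 + t * \<gamma>)) = t / (m0 + t * \<gamma>)"
    using assms nz by (simp add: field_simps)
  show ?thesis using l r e1 e2 by simp
qed

lemma key:
  fixes D :: "(real^'n) set" and p :: "real^'n"
  assumes SCp: "\<exists>r0>0. \<forall>s. 0 < s \<and> s \<le> r0 \<longrightarrow> (\<exists>\<epsilon>>0. \<forall>z w. dist z p < \<epsilon> \<and> norm w = 1 \<longrightarrow>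
            \<not> (z + s *\<^sub>R w \<in> D \<and> z - s *\<^sub>R w \<in> D))"
    and \<tau>: "\<tau> > 0"
  shows "\<exists>\<tau>'>0. \<forall>f c R. 0 < R \<and> cball c R \<subseteq> D \<and> projective_map_on f D \<and> f ` D \<subseteq> D \<and> dist (f c) p < \<tau>'
           \<longrightarrow> (\<forall>y\<in>cball c (R/2). dist (f y) p < 2*\<tau>)"
proof -
  obtain r0 where r0: "r0 > 0" "\<forall>s. 0 < s \<and> s \<le> r0 \<longrightarrow> (\<exists>\<epsilon>>0. \<forall>z w. dist z p < \<epsilon> \<and> norm w = 1 \<longrightarrow>
            \<not> (z + s *\<^sub>R w \<in> D \<and> z - s *\<^sub>R w \<in> D))" using SCp by blast
  define s where "s = min (\<tau>/2) r0"
  have s: "0 < s" "s \<le> r0" "s \<le> \<tau>/2" using r0 \<tau> by (auto simp: s_def)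
  obtain \<epsilon> where \<epsilon>: "\<epsilon> > 0" "\<forall>z w. dist z p < \<epsilon> \<and> norm w = 1 \<longrightarrow> \<not> (z + s *\<^sub>R w \<in> D \<and> z - s *\<^sub>R w \<in> D)"
    using r0(2) s by blast
  show ?thesis
  proof (rule exI[of _ "min \<tau> \<epsilon>"], intro conjI allI impI ballI)
    show "min \<tau> \<epsilon> > 0" using \<tau> \<epsilon> by simp
    fix f c R y
    assume A: "0 < R \<and> cball c R \<subseteq> D \<and> projective_map_on f D \<and> f ` D \<subseteq> D \<and> dist (f c) p < min \<tau> \<epsilon>"
      and y: "y \<in> cball c (R/2)"
    have R: "R > 0" and cb: "cball c R \<subseteq> D" and fD: "f ` D \<subseteq> D" and fc: "dist (f c) p < \<tau>" "dist (f c) p < \<epsilon>"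
      using A by auto
    obtain L :: "real \<times> (real^'n) \<Rightarrow> real \<times> (real^'n)" where L: "linear L"
      "\<forall>x\<in>D. fst (L (1, x)) \<noteq> 0 \<and> f x = (1 / fst (L (1, x))) *\<^sub>R snd (L (1, x))"
      using A unfolding projective_map_on_def by blast
    show "dist (f y) p < 2*\<tau>"
    proof (rule ccontr)
      assume fy: "\<not> dist (f y) p < 2*\<tau>"
      have yc: "y \<noteq> c" using fy fc \<tau> by auto
      define d where "d = norm (y - c)"
      have d: "0 < d" "d \<le> R/2" using yc y by (auto simp: d_def dist_norm norm_minus_commute)
      define u where "u = (1/d) *\<^sub>R (y - c)"
      have yu: "y = c + d *\<^sub>R u" using d by (simp add: u_def)
      have u1: "norm u = 1" using d by (simp add: u_def d_def)
      define m0 where "m0 = fst (L (1, c))"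
      define \<gamma> where "\<gamma> = fst (L (0, u))"
      define B where "B = snd (L (1, c))"
      define C where "C = snd (L (0, u))"
      have inD: "c + t *\<^sub>R u \<in> D" if "\<bar>t\<bar> \<le> R" for t
        using cb that u1 by (auto simp: dist_norm)
      have mt: "m0 + t * \<gamma> \<noteq> 0 \<and> f (c + t *\<^sub>R u) = (1 / (m0 + t * \<gamma>)) *\<^sub>R (B + t *\<^sub>R C)"
        if "\<bar>t\<bar> \<le> R" for t
        using L(2)[rule_format, OF inD[OF that]] proj_line[OF L(1), of c t u]
        by (simp add: m0_def \<gamma>_def B_def C_def)
      have m00: "m0 \<noteq> 0" using mt[of 0] R by simp
      have Ppos: "m0 * (m0 + t * \<gamma>) > 0" if "\<bar>t\<bar> \<le> R" for t
      proof (rule ccontr)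
        assume "\<not> m0 * (m0 + t * \<gamma>) > 0"
        hence P: "m0 * (m0 + t * \<gamma>) \<le> 0" by simp
        have m2: "m0 * m0 > 0" using m00 not_real_square_gt_zero by blast
        define Dn where "Dn = m0 * m0 - m0 * (m0 + t * \<gamma>)"
        define lam where "lam = (m0 * m0) / Dn"
        have den: "Dn \<ge> m0 * m0" using P by (simp add: Dn_def)
        have Dn: "Dn > 0" using den m2 by linarith
        have l0: "0 < lam" "lam \<le> 1" using den m2 Dn by (auto simp: lam_def divide_le_eq_1)
        have "m0 * (m0 + (lam * t) * \<gamma>) = m0 * m0 - lam * Dn"
          by (simp add: algebra_simps Dn_def)
        also have "\<dots> = 0" using Dn by (simp add: lam_def)
        finally have "m0 + (lam * t) * \<gamma> = 0" using m00 by simp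
        moreover have "\<bar>lam * t\<bar> \<le> R"
        proof -
          have "lam * \<bar>t\<bar> \<le> \<bar>t\<bar>" using l0 by (intro mult_left_le_one_le) auto
          then show ?thesis using l0 that by (simp add: abs_mult)
        qed
        ultimately show False using mt by blast
      qed
      define \<mu> where "\<mu> t = t / (m0 * (m0 + t * \<gamma>))" for t
      define w where "w = m0 *\<^sub>R C - \<gamma> *\<^sub>R B"
      have fc0: "f c = (1 / m0) *\<^sub>R B" using mt[of 0] R by simp
      have fline: "f (c + t *\<^sub>R u) = f c + \<mu> t *\<^sub>R w" if "\<bar>t\<bar> \<le> R" for t
        using mt[OF that] proj_diff[OF m00, of t \<gamma> B C] fc0 by (simp add: \<mu>_def w_def)
      have "norm (f y - f c) \<ge> \<tau>"
      proof -
        have "2 * \<tau> \<le> dist (f y) p" using fy by simp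
        also have "\<dots> \<le> dist (f y) (f c) + dist (f c) p" by (rule dist_triangle)
        finally show ?thesis using fc by (simp add: dist_norm)
      qed
      moreover have "f y - f c = \<mu> d *\<^sub>R w" using fline[of d] d yu by simp
      ultimately have big: "\<mu> d * norm w \<ge> \<tau>"
        using Ppos[of d] d by (simp add: \<mu>_def abs_of_pos)
      have wnz: "norm w > 0"
      proof (rule ccontr)
        assume "\<not> norm w > 0"
        hence "norm w = 0" by simp
        thus False using big \<tau> by simp
      qed
      have P1: "m0 * (m0 + d * \<gamma>) > 0" using Ppos[of d] d by simp
      have P2: "m0 * (m0 + (-R) * \<gamma>) > 0" using Ppos[of "-R"] R by simp
      have P3: "m0 * (m0 + R * \<gamma>) > 0" using Ppos[of R] R by simp
      have ineq: "d * (m0 * (m0 + (-R) * \<gamma>)) \<le> 2 * R * (m0 * (m0 + d * \<gamma>))"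
      proof -
        define k where "k = m0 * \<gamma>"
        have a: "m0 * m0 + R * k > 0" using P3 by (simp add: k_def algebra_simps)
        have b: "0 \<le> (2*R - d) * (m0 * m0 + R * k)" using a d by simp
        have "0 \<le> (2*R - d) * (m0 * m0) + 3 * R * d * k"
        proof (cases "k \<ge> 0")
          case True then show ?thesis using d R by (simp add: mult_nonneg_nonneg)
        next
          case False
          have "0 \<le> 2 * R * (-k) * (R - 2 * d)" using False d R by (intro mult_nonneg_nonneg) auto
          then show ?thesis using b by (simp add: algebra_simps)
        qed
        then show ?thesis by (simp add: algebra_simps k_def)
      qed
      have half: "\<mu> d / 2 \<le> - \<mu> (-R)"
        using P1 P2 ineq by (simp add: \<mu>_def field_simps)
      have cont: "continuous_on {-R..R} \<mu>"
      proof -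
        have nz: "\<forall>t\<in>{-R..R}. m0 * (m0 + t * \<gamma>) \<noteq> 0"
        proof
          fix t :: real assume "t \<in> {-R..R}"
          hence "\<bar>t\<bar> \<le> R" by auto
          from Ppos[OF this] show "m0 * (m0 + t * \<gamma>) \<noteq> 0" by (metis less_irrefl mult_zero_left mult_zero_right)
        qed
        show ?thesis unfolding \<mu>_def
          by (rule continuous_on_divide[OF _ _ nz]) (auto intro!: continuous_intros)
      qed
      have s1': "s / norm w \<le> \<mu> d / 2"
      proof -
        have "s * 2 \<le> \<mu> d * norm w" using big s by linarith
        then show ?thesis using wnz by (simp add: field_simps)
      qed
      have "s / norm w > 0" using s wnz by simp
      hence s1: "s / norm w \<le> \<mu> d" using s1' by linarith
      have s2: "- \<mu> (-R) \<ge> s / norm w" using s1' half by linarith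
      have c2: "continuous_on {0..d} \<mu>" by (rule continuous_on_subset[OF cont]) (use d in auto)
      have c1: "continuous_on {-R..0} \<mu>" by (rule continuous_on_subset[OF cont]) (use R in auto)
      have \<mu>0: "\<mu> 0 = 0" by (simp add: \<mu>_def)
      have sw: "s / norm w > 0" using s wnz by simp
      obtain t2 where t2: "0 \<le> t2" "t2 \<le> d" "\<mu> t2 = s / norm w"
        using IVT'[of \<mu> 0 "s / norm w" d, OF _ s1 _ c2] \<mu>0 sw d by auto
      obtain t1 where t1: "-R \<le> t1" "t1 \<le> 0" "\<mu> t1 = - (s / norm w)"
        using IVT'[of \<mu> "-R" "- (s / norm w)" 0, OF _ _ _ c1] s2 \<mu>0 sw R by auto
      define wh where "wh = (1 / norm w) *\<^sub>R w"
      have wh: "norm wh = 1" using wnz by (simp add: wh_def)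
      have "f (c + t2 *\<^sub>R u) = f c + s *\<^sub>R wh" using fline[of t2] t2 d by (simp add: wh_def)
      moreover have "f (c + t1 *\<^sub>R u) = f c - s *\<^sub>R wh" using fline[of t1] t1 by (simp add: wh_def)
      moreover have "f (c + t2 *\<^sub>R u) \<in> D" using fD inD[of t2] t2 d by auto
      moreover have "f (c + t1 *\<^sub>R u) \<in> D" using fD inD[of t1] t1 by auto
      ultimately show False using \<epsilon>(2)[rule_format, of "f c" wh] fc(2) wh by simp
    qed
  qed
qed



theorem lemma2:
  fixes D U :: "(real^'n) set" and p q :: "real^'n"
    and \<phi> :: "nat \<Rightarrow> real^'n \<Rightarrow> real^'n"
  assumes "domain D"
    and "strictly_convex_boundary_point D p"
    and "q \<in> D"
    and "\<And>j. projective_automorphism (\<phi> j) D"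
    and "(\<lambda>j. \<phi> j q) \<longlonglongrightarrow> p"
    and "p \<in> interior U"
    and "convex (D \<inter> U)"
  shows "\<forall>K. compact K \<and> K \<subseteq> D \<longrightarrow>
           (\<exists>j0. \<forall>j\<ge>j0. K \<subseteq> {x\<in>D. \<phi> j x \<in> D \<inter> U})"
proof -
  have oD: "open D" and cD: "connected D" using assms(1) by (auto simp: domain_def)
  note SCp = SC[OF assms(2) oD]
  have pj: "projective_map_on (\<phi> j) D" and fD: "\<phi> j ` D \<subseteq> D" for j
    using assms(4)[of j] unfolding projective_automorphism_def by (auto simp: bij_betw_def)
  have loc: "\<exists>N. \<forall>j\<ge>N. \<forall>y\<in>cball x (R/2). dist (\<phi> j y) p < 2*\<tau>"
    if h: "R > 0" "cball x R \<subseteq> D" "(\<lambda>j. \<phi> j x) \<longlonglongrightarrow> p" "\<tau> > 0" for x R \<tau>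
  proof -
    obtain \<tau>' where \<tau>': "\<tau>' > 0" "\<forall>f c R. 0 < R \<and> cball c R \<subseteq> D \<and> projective_map_on f D \<and> f ` D \<subseteq> D \<and> dist (f c) p < \<tau>'
           \<longrightarrow> (\<forall>y\<in>cball c (R/2). dist (f y) p < 2*\<tau>)"
      using key[OF SCp h(4)] by blast
    obtain N where N: "\<forall>j\<ge>N. dist (\<phi> j x) p < \<tau>'"
      using h(3) \<tau>'(1) unfolding lim_sequentially by blast
    show ?thesis
      using \<tau>'(2) N h pj fD by blast
  qed
  have tends: "(\<lambda>j. \<phi> j y) \<longlonglongrightarrow> p"
    if h: "R > 0" "cball x R \<subseteq> D" "(\<lambda>j. \<phi> j x) \<longlonglongrightarrow> p" "y \<in> cball x (R/2)" for x R y
    unfolding lim_sequentially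
  proof (intro allI impI)
    fix r :: real assume r: "r > 0"
    obtain N where "\<forall>j\<ge>N. \<forall>y\<in>cball x (R/2). dist (\<phi> j y) p < 2*(r/2)"
      using loc[OF h(1-3), of "r/2"] r by auto
    then show "\<exists>N. \<forall>n\<ge>N. dist (\<phi> n y) p < r" using h(4) by (intro exI[of _ N]) auto
  qed
  define A where "A = {x\<in>D. (\<lambda>j. \<phi> j x) \<longlonglongrightarrow> p}"
  define B where "B = {x\<in>D. \<not> (\<lambda>j. \<phi> j x) \<longlonglongrightarrow> p}"
  have oA: "open A" unfolding open_contains_ball
  proof
    fix x assume x: "x \<in> A"
    obtain R where R: "R > 0" "cball x R \<subseteq> D" using x oD unfolding A_def open_contains_cball by blast
    have "ball x (R/2) \<subseteq> A"
    proof
      fix y assume y: "y \<in> ball x (R/2)"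
      hence "y \<in> cball x R" using R by auto
      hence "y \<in> D" using R by auto
      moreover have "(\<lambda>j. \<phi> j y) \<longlonglongrightarrow> p" using tends[OF R, of y] x y unfolding A_def by auto
      ultimately show "y \<in> A" unfolding A_def by simp
    qed
    then show "\<exists>e>0. ball x e \<subseteq> A" using R by (intro exI[of _ "R/2"]) auto
  qed
  have oB: "open B" unfolding open_contains_ball
  proof
    fix x assume x: "x \<in> B"
    obtain R where R: "R > 0" "cball x R \<subseteq> D" using x oD unfolding B_def open_contains_cball by blast
    have "ball x (R/4) \<subseteq> B"
    proof
      fix y assume y: "y \<in> ball x (R/4)"
      have yD: "y \<in> D" using y R by auto
      show "y \<in> B"
      proof (rule ccontr)
        assume "y \<notin> B"
        hence ty: "(\<lambda>j. \<phi> j y) \<longlonglongrightarrow> p" using yD unfolding B_def by auto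
        have "cball y (R/2) \<subseteq> cball x R"
        proof
          fix z assume "z \<in> cball y (R/2)"
          then have "dist y z \<le> R/2" by simp
          moreover have "dist x y < R/4" using y by simp
          ultimately have "dist x z \<le> R" using dist_triangle[of x z y] R(1) by linarith
          then show "z \<in> cball x R" by simp
        qed
        hence cy: "cball y (R/2) \<subseteq> D" using R by auto
        have "x \<in> cball y (R/2/2)" using y by (simp add: dist_commute)
        from tends[OF _ cy ty this] R have "(\<lambda>j. \<phi> j x) \<longlonglongrightarrow> p" by simp
        then show False using x unfolding B_def by simp
      qed
    qed
    then show "\<exists>e>0. ball x e \<subseteq> B" using R by (intro exI[of _ "R/4"]) auto
  qed
  have "A \<inter> D = {} \<or> B \<inter> D = {}"
    by (rule connectedD[OF cD oA oB]) (auto simp: A_def B_def)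
  moreover have "q \<in> A \<inter> D" using assms(3,5) by (simp add: A_def)
  ultimately have BD: "B \<inter> D = {}" by blast
  have all: "(\<lambda>j. \<phi> j x) \<longlonglongrightarrow> p" if "x \<in> D" for x
    using BD that unfolding B_def by blast
  obtain r where r: "r > 0" "ball p r \<subseteq> U" using assms(6) mem_interior by blast
  show ?thesis
  proof (intro allI impI)
    fix K assume K: "compact K \<and> K \<subseteq> D"
    have "\<forall>x\<in>K. \<exists>RN. fst RN > 0 \<and> (\<forall>j\<ge>snd RN. \<forall>y\<in>ball x (fst RN). dist (\<phi> j y) p < r)"
    proof
      fix x assume x: "x \<in> K"
      hence xD: "x \<in> D" using K by auto
      obtain R where R: "R > 0" "cball x R \<subseteq> D" using xD oD open_contains_cball by blast
      obtain N where N: "\<forall>j\<ge>N. \<forall>y\<in>cball x (R/2). dist (\<phi> j y) p < 2*(r/2)"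
        using loc[OF R all[OF xD], of "r/2"] r by auto
      show "\<exists>RN. fst RN > 0 \<and> (\<forall>j\<ge>snd RN. \<forall>y\<in>ball x (fst RN). dist (\<phi> j y) p < r)"
        using N R by (intro exI[of _ "(R/2, N)"]) auto
    qed
    then obtain RN where RN: "\<forall>x\<in>K. fst (RN x) > 0 \<and> (\<forall>j\<ge>snd (RN x). \<forall>y\<in>ball x (fst (RN x)). dist (\<phi> j y) p < r)"
      by (metis bchoice)
    have cov: "K \<subseteq> (\<Union>x\<in>K. ball x (fst (RN x)))" using RN by force
    obtain C where C: "C \<subseteq> K" "finite C" "K \<subseteq> (\<Union>x\<in>C. ball x (fst (RN x)))"
      using compactE_image[of K K "\<lambda>x. ball x (fst (RN x))"] K cov by blast
    show "\<exists>j0. \<forall>j\<ge>j0. K \<subseteq> {x\<in>D. \<phi> j x \<in> D \<inter> U}"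
    proof (intro exI[of _ "\<Sum>x\<in>C. snd (RN x)"] allI impI subsetI)
      fix j y assume j: "(\<Sum>x\<in>C. snd (RN x)) \<le> j" and y: "y \<in> K"
      obtain x where x: "x \<in> C" "y \<in> ball x (fst (RN x))" using C y by blast
      have "snd (RN x) \<le> (\<Sum>x\<in>C. snd (RN x))" using C x by (intro member_le_sum) auto
      hence "dist (\<phi> j y) p < r" using RN x C j by auto
      hence "\<phi> j y \<in> U" using r by (auto simp: dist_commute)
      moreover have "y \<in> D" using y K by auto
      ultimately show "y \<in> {x\<in>D. \<phi> j x \<in> D \<inter> U}" using fD by auto
    qed
  qed
qed

end
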